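(* Let $\tau:\mathscr{A}\to\mathbb{C}$ be a linear functional with $|\tau(q)|\le C_0^{\deg q}$ for all monomials $q$, and $A>1$ with $C_0/A<1/2$. Let $g\in\mathscr{A}_0^{(A)}$ with $\|g\|_A<A^2/2$ and set $$Q(\Sigma g)=\sum_{m\ge0}\frac{(-1)^m}{m+2}Q_{m+2}(\Sigma g).$$ Then this series converges in $\|\cdot\|_A$, and (with $\log(1+x)=-\sum_{m\ge1}(-x)^m/m$) $$Q(\Sigma g)=(1\otimes\tau+\tau\otimes1)\Big\{\sum_{i=1}^n(\mathscr{J}\mathscr{D}\Sigma g)_{ii}-\big(\log(1+\mathscr{J}\mathscr{D}\Sigma g)\big)_{ii}\Big\}.$$ Moreover, for $f,g$ in $\{h\in\mathscr{A}_0^{(A)}:\|h\|_A<A^2/2\}$, $$\|Q(\Sigma g)-Q(\Sigma f)\|_A\le\|f-g\|_A\frac{2}{A^2}\Big(\frac{1}{(1-\frac{2\|f\|_A}{A^2})(1-\frac{2\|g\|_A}{A^2})}-1\Big),$$ and $$\|Q(\Sigma g)\|_A\le\frac{(2\|g\|_A/A^2)^2}{1-2\|g\|_A/A^2}.$$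
   Context: $\mathscr{A}=\mathbb{C}\langle X_1,\dots,X_n\rangle$, $\mathscr{A}_0$ the span of monomials of degree $\ge1$; $\|P\|_A=\sum_q|\lambda_q(P)|A^{\deg q}$; $\mathscr{A}^{(A)},\mathscr{A}_0^{(A)}$ the completions. $\Sigma q=q/\deg q$ on monomials of degree $\ge1$, extended by continuity. $\partial_j$: derivation with $\partial_jX_i=\delta_{ij}1\otimes1$; $\mathscr{D}_jq=\sum_{q=BX_jC}CB$; $\mathscr{J}\mathscr{D}g=(\partial_j\mathscr{D}_ig)_{i,j}\in M_n(\mathscr{A}\otimes\mathscr{A}^{op})$, products using $(a\otimes b)(c\otimes d)=ac\otimes db$. $(1\otimes\tau+\tau\otimes1)(a\otimes b)=a\tau(b)+\tau(a)b$. $Q_m(g_1,\dots,g_m)=(1\otimes\tau+\tau\otimes1)\{\sum_i[(\mathscr{J}\mathscr{D}g_1)\cdots(\mathscr{J}\mathscr{D}g_m)]_{ii}\}$ for $g_k\in\mathscr{A}_0$, extended continuously, and $Q_m(\Sigma g)=Q_m(\Sigma g,\dots,\Sigma g)$. *)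

theory Defs
  imports "HOL-Analysis.Analysis"
begin

text \<open>Variables X_1..X_n are the elements of a finite type 'v. A monomial is a
word ('v list); its degree is its length. An element of the completion of the
algebra of noncommutative polynomials is represented by its coefficient function;
an element of the completion of A (x) A^op by its coefficient function on pairs of
monomials (coefficient of p (x) r); an element of M_n(A (x) A^op) by a 'v-indexed
matrix of such.\<close>

type_synonym 'v ser = "'v list \<Rightarrow> complex"
type_synonym 'v ten = "'v list \<times> 'v list \<Rightarrow> complex"
type_synonym 'v mat = "'v \<Rightarrow> 'v \<Rightarrow> 'v ten"

definition normA :: "real \<Rightarrow> 'v ser \<Rightarrow> real" where
  "normA A P = (\<Sum>\<^sub>\<infinity>w. cmod (P w) * A ^ length w)"

definition inCompl :: "real \<Rightarrow> 'v ser \<Rightarrow> bool" where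
  "inCompl A P \<longleftrightarrow> (\<lambda>w. cmod (P w) * A ^ length w) summable_on UNIV"

definition sigmaop :: "'v ser \<Rightarrow> 'v ser" where
  "sigmaop P w = (if w = [] then 0 else P w / of_nat (length w))"

text \<open>Cyclic derivative: D_j q = sum_{q = B X_j C} C B.  The coefficient of w = C B
comes from q = B X_j C, where C = take k w, B = drop k w.\<close>
definition cycD :: "'v \<Rightarrow> 'v ser \<Rightarrow> 'v ser" where
  "cycD j P w = (\<Sum>k\<le>length w. P (drop k w @ [j] @ take k w))"

text \<open>Free difference quotient: d_j q = sum_{q = B X_j C} B (x) C.\<close>
definition ncderiv :: "'v \<Rightarrow> 'v ser \<Rightarrow> 'v ten" where
  "ncderiv j P pr = P (fst pr @ [j] @ snd pr)"

definition JD :: "'v ser \<Rightarrow> 'v mat" where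
  "JD P i j = ncderiv j (cycD i P)"

text \<open>Product in A (x) A^op: (a (x) b)(c (x) d) = ac (x) db.\<close>
definition tmult :: "'v ten \<Rightarrow> 'v ten \<Rightarrow> 'v ten" where
  "tmult S T pr = (\<Sum>k\<le>length (fst pr). \<Sum>l\<le>length (snd pr).
      S (take k (fst pr), drop l (snd pr)) * T (drop k (fst pr), take l (snd pr)))"

definition mmult :: "('v::finite) mat \<Rightarrow> 'v mat \<Rightarrow> 'v mat" where
  "mmult M N i k = (\<lambda>pr. \<Sum>j\<in>UNIV. tmult (M i j) (N j k) pr)"

definition tunit :: "'v ten" where
  "tunit pr = (if fst pr = [] \<and> snd pr = [] then 1 else 0)"

definition mident :: "'v mat" where
  "mident i j = (if i = j then tunit else (\<lambda>_. 0))"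

fun mpow :: "('v::finite) mat \<Rightarrow> nat \<Rightarrow> 'v mat" where
  "mpow M 0 = mident"
| "mpow M (Suc m) = mmult (mpow M m) M"

definition mtrace :: "('v::finite) mat \<Rightarrow> 'v ten" where
  "mtrace M pr = (\<Sum>i\<in>UNIV. M i i pr)"

text \<open>(1 (x) tau + tau (x) 1)(a (x) b) = a tau(b) + tau(a) b, applied to the
(absolutely convergent) expansion in the monomial basis, i.e. the continuous
extension of the map.  tau is given by its values on monomials.\<close>
definition trmap :: "'v ser \<Rightarrow> 'v ten \<Rightarrow> 'v ser" where
  "trmap tau T w = (\<Sum>\<^sub>\<infinity>q. T (w, q) * tau q) + (\<Sum>\<^sub>\<infinity>p. T (p, w) * tau p)"

definition Qm :: "'v ser \<Rightarrow> ('v::finite) ser \<Rightarrow> nat \<Rightarrow> 'v ser" where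
  "Qm tau g m = trmap tau (mtrace (mpow (JD (sigmaop g)) m))"

definition Qser :: "'v ser \<Rightarrow> ('v::finite) ser \<Rightarrow> 'v ser" where
  "Qser tau g w = (\<Sum>m. (-1) ^ m / (of_nat m + 2) * Qm tau g (m + 2) w)"

definition logp :: "('v::finite) mat \<Rightarrow> nat \<Rightarrow> 'v mat" where
  "logp M N i j pr = - (\<Sum>m\<in>{1..N}. (-1) ^ m / of_nat m * mpow M m i j pr)"

end

theory Submission
  imports Defs
begin

lemma fb_summable:
  fixes f :: "'a \<Rightarrow> real"
  assumes nn: "\<And>x. 0 \<le> f x" and fb: "\<And>F. finite F \<Longrightarrow> sum f F \<le> B"
  shows "f summable_on UNIV \<and> infsum f UNIV \<le> B"
proof -
  have s: "f summable_on UNIV"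
    by (rule nonneg_bdd_above_summable_on) (use nn fb in \<open>auto intro!: bdd_aboveI2\<close>)
  moreover have "infsum f UNIV \<le> B" by (rule infsum_le_finite_sums[OF s]) (use fb in auto)
  ultimately show ?thesis by simp
qed

lemma fs_le_infsum:
  fixes f :: "'a \<Rightarrow> real"
  assumes "f summable_on UNIV" "\<And>x. 0 \<le> f x" "finite F"
  shows "sum f F \<le> infsum f UNIV"
  using finite_sum_le_infsum[OF assms(1) assms(3)] assms(2) by auto

definition wt :: "real \<Rightarrow> real \<Rightarrow> 'v list \<times> 'v list \<Rightarrow> real" where
  "wt a b pr = a ^ length (fst pr) * b ^ length (snd pr)"
definition wsum :: "real \<Rightarrow> real \<Rightarrow> 'v ten \<Rightarrow> bool" where
  "wsum a b T \<longleftrightarrow> (\<lambda>x. cmod (T x) * wt a b x) summable_on UNIV"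
definition wn :: "real \<Rightarrow> real \<Rightarrow> 'v ten \<Rightarrow> real" where
  "wn a b T = (\<Sum>\<^sub>\<infinity>x. cmod (T x) * wt a b x)"

context fixes a b :: real assumes a0: "0 \<le> a" and b0: "0 \<le> b"
begin

lemma wt_nn: "0 \<le> wt a b x" using a0 b0 by (simp add: wt_def)

lemma wsumI:
  assumes "\<And>F. finite F \<Longrightarrow> (\<Sum>x\<in>F. cmod (T x) * wt a b x) \<le> B"
  shows "wsum a b T \<and> wn a b T \<le> B"
proof -
  have "(\<lambda>x. cmod (T x) * wt a b x) summable_on UNIV \<and> infsum (\<lambda>x. cmod (T x) * wt a b x) UNIV \<le> B"
    by (rule fb_summable) (auto simp: wt_nn assms)
  then show ?thesis unfolding wsum_def wn_def by simp
qed

lemma wsum_fin: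
  assumes "wsum a b T" "finite F"
  shows "(\<Sum>x\<in>F. cmod (T x) * wt a b x) \<le> wn a b T"
  unfolding wn_def by (rule fs_le_infsum) (use assms in \<open>auto simp: wsum_def wt_nn\<close>)

lemma wn_nn: "0 \<le> wn a b T"
  unfolding wn_def by (rule infsum_nonneg) (simp add: wt_nn)

lemma tmult_bound:
  fixes S T :: "'v ten"
  assumes S: "wsum a b S" and T: "wsum a b T"
  shows "wsum a b (tmult S T) \<and> wn a b (tmult S T) \<le> wn a b S * wn a b T"
proof (rule wsumI)
  fix F :: "('v list \<times> 'v list) set" assume fF: "finite F"
  define D where "D = (SIGMA pr:F. {..length (fst pr)} \<times> {..length (snd pr)})"
  define \<phi> where "\<phi> = (\<lambda>(pr::'v list \<times> 'v list, k::nat, l::nat).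
      ((take k (fst pr), drop l (snd pr)), (drop k (fst pr), take l (snd pr))))"
  define \<psi> where "\<psi> = (\<lambda>((x1::'v list, x2::'v list), (y1::'v list, y2::'v list)).
      ((x1 @ y1, y2 @ x2), length x1, length y2))"
  define f where "f = (\<lambda>(x, y). (cmod (S x) * wt a b x) * (cmod (T y) * wt a b y))"
  have fD: "finite D" unfolding D_def using fF by auto
  have inj: "inj_on \<phi> D"
  proof (rule inj_on_inverseI[where g = \<psi>])
    fix z assume "z \<in> D"
    then obtain p r k l where z: "z = ((p, r), k, l)" "k \<le> length p" "l \<le> length r"
      unfolding D_def by auto
    show "\<psi> (\<phi> z) = z" using z unfolding \<phi>_def \<psi>_def by (simp add: min_def)
  qed
  have "(\<Sum>x\<in>F. cmod (tmult S T x) * wt a b x)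
      \<le> (\<Sum>pr\<in>F. \<Sum>(k,l)\<in>{..length (fst pr)} \<times> {..length (snd pr)}. f (\<phi> (pr, k, l)))"
  proof (rule sum_mono)
    fix pr assume "pr \<in> F"
    obtain p r where pr: "pr = (p, r)" by (cases pr)
    have "cmod (tmult S T pr) \<le> (\<Sum>k\<le>length p. \<Sum>l\<le>length r.
        cmod (S (take k p, drop l r)) * cmod (T (drop k p, take l r)))"
      unfolding tmult_def pr fst_conv snd_conv
      by (rule order.trans[OF norm_sum sum_mono], rule order.trans[OF norm_sum sum_mono])
         (simp add: norm_mult)
    then have "cmod (tmult S T pr) * wt a b pr \<le> (\<Sum>k\<le>length p. \<Sum>l\<le>length r.
        cmod (S (take k p, drop l r)) * cmod (T (drop k p, take l r))) * wt a b pr"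
      by (rule mult_right_mono) (rule wt_nn)
    also have "\<dots> = (\<Sum>(k,l)\<in>{..length p} \<times> {..length r}. f (\<phi> (pr, k, l)))"
      unfolding sum_distrib_right sum.cartesian_product[symmetric]
    proof (intro sum.cong refl)
      fix k l assume "k \<in> {..length p}" "l \<in> {..length r}"
      then have e1: "a ^ length p = a ^ k * a ^ (length p - k)"
        and e2: "b ^ length r = b ^ (length r - l) * b ^ l"
        by (simp_all add: power_add[symmetric])
      then have "wt a b pr = wt a b (take k p, drop l r) * wt a b (drop k p, take l r)"
        using \<open>k \<in> _\<close> \<open>l \<in> _\<close> unfolding pr wt_def by (simp add: min_def)
      then show "cmod (S (take k p, drop l r)) * cmod (T (drop k p, take l r)) * wt a b pr
          = f (\<phi> (pr, k, l))" unfolding f_def \<phi>_def pr by (simp add: algebra_simps)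
    qed
    finally show "cmod (tmult S T pr) * wt a b pr
       \<le> (\<Sum>(k,l)\<in>{..length (fst pr)} \<times> {..length (snd pr)}. f (\<phi> (pr, k, l)))"
      by (simp add: pr)
  qed
  also have "\<dots> = (\<Sum>z\<in>D. f (\<phi> z))"
    unfolding D_def using sum.Sigma[of F "\<lambda>pr. {..length (fst pr)} \<times> {..length (snd pr)}"
        "\<lambda>pr kl. f (\<phi> (pr, kl))"] fF by (simp add: split_def)
  also have "\<dots> = (\<Sum>y\<in>\<phi> ` D. f y)" using sum.reindex[OF inj, of f] by simp
  also have "\<dots> \<le> (\<Sum>y\<in>(fst ` \<phi> ` D) \<times> (snd ` \<phi> ` D). f y)"
  proof (rule sum_mono2)
    show "finite (fst ` \<phi> ` D \<times> snd ` \<phi> ` D)" using fD by simp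
    show "\<phi> ` D \<subseteq> fst ` \<phi> ` D \<times> snd ` \<phi> ` D" proof
      fix y assume "y \<in> \<phi> ` D" then show "y \<in> fst ` \<phi> ` D \<times> snd ` \<phi> ` D"
        using imageI[of y "\<phi> ` D" fst] imageI[of y "\<phi> ` D" snd] by (simp add: mem_Times_iff)
    qed
    show "0 \<le> f y" for y by (cases y) (simp add: f_def wt_nn)
  qed
  also have "\<dots> = (\<Sum>x\<in>fst ` \<phi> ` D. cmod (S x) * wt a b x) * (\<Sum>y\<in>snd ` \<phi> ` D. cmod (T y) * wt a b y)"
    unfolding f_def sum_product sum.cartesian_product by simp
  also have "\<dots> \<le> wn a b S * wn a b T"
    by (rule mult_mono) (use fD S T in \<open>auto intro!: wsum_fin sum_nonneg simp: wt_nn wn_nn\<close>)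
  finally show "(\<Sum>x\<in>F. cmod (tmult S T x) * wt a b x) \<le> wn a b S * wn a b T" .
qed

end


context fixes a b :: real assumes a0: "0 \<le> a" and b0: "0 \<le> b"
begin

lemma wsum_le:
  fixes U :: "'v ten" and T :: "'i \<Rightarrow> 'v ten"
  assumes fI: "finite I" and c: "\<And>i. i \<in> I \<Longrightarrow> 0 \<le> c i"
    and T: "\<And>i. i \<in> I \<Longrightarrow> wsum a b (T i)"
    and le: "\<And>x. cmod (U x) \<le> (\<Sum>i\<in>I. c i * cmod (T i x))"
  shows "wsum a b U \<and> wn a b U \<le> (\<Sum>i\<in>I. c i * wn a b (T i))"
proof (rule wsumI[OF a0 b0])
  fix F :: "('v list \<times> 'v list) set" assume fF: "finite F"
  have "(\<Sum>x\<in>F. cmod (U x) * wt a b x) \<le> (\<Sum>x\<in>F. (\<Sum>i\<in>I. c i * cmod (T i x)) * wt a b x)"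
    by (intro sum_mono mult_right_mono le wt_nn[OF a0 b0])
  also have "\<dots> = (\<Sum>x\<in>F. \<Sum>i\<in>I. c i * (cmod (T i x) * wt a b x))"
    by (simp add: sum_distrib_right mult.assoc)
  also have "\<dots> = (\<Sum>i\<in>I. \<Sum>x\<in>F. c i * (cmod (T i x) * wt a b x))"
    by (rule sum.swap)
  also have "\<dots> = (\<Sum>i\<in>I. c i * (\<Sum>x\<in>F. cmod (T i x) * wt a b x))"
    by (simp add: sum_distrib_left)
  also have "\<dots> \<le> (\<Sum>i\<in>I. c i * wn a b (T i))"
    by (intro sum_mono mult_left_mono wsum_fin[OF a0 b0] T fF c)
  finally show "(\<Sum>x\<in>F. cmod (U x) * wt a b x) \<le> (\<Sum>i\<in>I. c i * wn a b (T i))" .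
qed

lemma wsum_le1:
  assumes T: "wsum a b T" and le: "\<And>x. cmod (U x) \<le> c * cmod (T x)" and c: "0 \<le> c"
  shows "wsum a b U \<and> wn a b U \<le> c * wn a b T"
  using wsum_le[of "{()}" "\<lambda>_. c" "\<lambda>_. T" U] assms by simp

lemma wsum_le2:
  assumes S: "wsum a b S" and T: "wsum a b T" and le: "\<And>x. cmod (U x) \<le> cmod (S x) + cmod (T x)"
  shows "wsum a b U \<and> wn a b U \<le> wn a b S + wn a b T"
  using wsum_le[of "{True, False}" "\<lambda>_. 1" "\<lambda>i. if i then S else T" U] assms by simp

lemma wsum_sum:
  fixes T :: "'i \<Rightarrow> 'v ten"
  assumes fI: "finite I" and T: "\<And>i. i \<in> I \<Longrightarrow> wsum a b (T i)"
  shows "wsum a b (\<lambda>x. \<Sum>i\<in>I. T i x) \<and> wn a b (\<lambda>x. \<Sum>i\<in>I. T i x) \<le> (\<Sum>i\<in>I. wn a b (T i))"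
  using wsum_le[of I "\<lambda>_. 1" T "\<lambda>x. \<Sum>i\<in>I. T i x"] assms by (simp add: norm_sum)

definition mwsum :: "('v::finite) mat \<Rightarrow> bool" where
  "mwsum M \<longleftrightarrow> (\<forall>i j. wsum a b (M i j))"
definition mn :: "('v::finite) mat \<Rightarrow> real" where
  "mn M = (\<Sum>i\<in>UNIV. \<Sum>j\<in>UNIV. wn a b (M i j))"

lemma mn_nn: "0 \<le> mn M" unfolding mn_def by (intro sum_nonneg wn_nn[OF a0 b0])

lemma mmult_bound:
  fixes M N :: "('v::finite) mat"
  assumes M: "mwsum M" and N: "mwsum N"
  shows "mwsum (mmult M N) \<and> mn (mmult M N) \<le> mn M * mn N"
proof -
  have tb: "wsum a b (tmult (M i j) (N j k)) \<and> wn a b (tmult (M i j) (N j k)) \<le> wn a b (M i j) * wn a b (N j k)"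
    for i j k using tmult_bound[OF a0 b0] M N unfolding mwsum_def by blast
  have e: "wsum a b (mmult M N i k) \<and> wn a b (mmult M N i k) \<le> (\<Sum>j\<in>UNIV. wn a b (M i j) * wn a b (N j k))" for i k
  proof -
    have "wsum a b (mmult M N i k) \<and> wn a b (mmult M N i k) \<le> (\<Sum>j\<in>UNIV. wn a b (tmult (M i j) (N j k)))"
      unfolding mmult_def using wsum_sum[of UNIV "\<lambda>j. tmult (M i j) (N j k)"] tb by simp
    moreover have "(\<Sum>j\<in>UNIV. wn a b (tmult (M i j) (N j k))) \<le> (\<Sum>j\<in>UNIV. wn a b (M i j) * wn a b (N j k))"
      by (intro sum_mono) (use tb in blast)
    ultimately show ?thesis by linarith
  qed
  have "mn (mmult M N) \<le> (\<Sum>i\<in>UNIV. \<Sum>k\<in>UNIV. \<Sum>j\<in>UNIV. wn a b (M i j) * wn a b (N j k))"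
    unfolding mn_def by (intro sum_mono) (use e in blast)
  also have "\<dots> = (\<Sum>i\<in>UNIV. \<Sum>j\<in>UNIV. wn a b (M i j) * (\<Sum>k\<in>UNIV. wn a b (N j k)))"
    by (rule sum.cong[OF refl], subst sum.swap, simp add: sum_distrib_left)
  also have "\<dots> \<le> (\<Sum>i\<in>UNIV. \<Sum>j\<in>UNIV. wn a b (M i j) * mn N)"
  proof (intro sum_mono mult_left_mono wn_nn[OF a0 b0])
    fix j
    show "(\<Sum>k\<in>UNIV. wn a b (N j k)) \<le> mn N" unfolding mn_def
      by (rule member_le_sum[of j UNIV "\<lambda>j. \<Sum>k\<in>UNIV. wn a b (N j k)", simplified])
         (auto intro: sum_nonneg wn_nn[OF a0 b0])
  qed
  also have "\<dots> = mn M * mn N" by (simp add: mn_def sum_distrib_right)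
  finally show ?thesis using e unfolding mwsum_def by blast
qed

lemma tmult_zero: "tmult (\<lambda>_. 0) T x = 0" unfolding tmult_def by simp

lemma tmult_tunit: "tmult tunit T = (T :: 'v ten)"
proof
  fix pr :: "'v list \<times> 'v list"
  obtain p r where pr: "pr = (p, r)" by (cases pr)
  have "tmult tunit T pr = (\<Sum>k\<le>length p. \<Sum>l\<le>length r.
       (if k = 0 then (if l = length r then T (p, r) else 0) else 0))"
    unfolding tmult_def pr tunit_def by (intro sum.cong refl) auto
  also have "\<dots> = (\<Sum>k\<le>length p. if k = 0 then T (p, r) else 0)"
    by (intro sum.cong refl) simp
  also have "\<dots> = T pr" by (simp add: pr)
  finally show "tmult tunit T pr = T pr" .
qed

lemma mmult_ident: "mmult mident M = (M :: ('v::finite) mat)"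
proof (intro ext)
  fix i k pr
  have "mmult mident M i k pr = (\<Sum>j\<in>UNIV. if j = i then M i k pr else 0)"
    unfolding mmult_def mident_def by (intro sum.cong refl) (auto simp: tmult_tunit tmult_zero)
  then show "mmult mident M i k pr = M i k pr" by simp
qed

lemma mpow_1: "mpow M (Suc 0) = M" by (simp add: mmult_ident)

lemma mpow_bound:
  assumes M: "mwsum M"
  shows "mwsum (mpow M (Suc m)) \<and> mn (mpow M (Suc m)) \<le> mn M ^ Suc m"
proof (induction m)
  case 0 then show ?case using M by (simp add: mmult_ident)
next
  case (Suc m)
  have "mwsum (mpow M (Suc (Suc m))) \<and> mn (mpow M (Suc (Suc m))) \<le> mn (mpow M (Suc m)) * mn M"
    using mmult_bound[OF conjunct1[OF Suc] M] by simp
  moreover have "mn (mpow M (Suc m)) * mn M \<le> mn M ^ Suc m * mn M"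
    by (intro mult_right_mono mn_nn) (use Suc in auto)
  ultimately show ?case by (simp add: mult.commute)
qed

lemma wsum_tunit: "wsum a b (tunit :: 'v ten)"
proof -
  have "wsum a b (tunit :: 'v ten) \<and> wn a b (tunit :: 'v ten) \<le> 1"
  proof (rule wsumI[OF a0 b0])
    fix F :: "('v list \<times> 'v list) set" assume fF: "finite F"
    have "(\<Sum>x\<in>F. cmod (tunit x) * wt a b x) = (\<Sum>x\<in>F. if x = ([], []) then 1 else 0)"
      by (intro sum.cong refl) (auto simp: tunit_def wt_def)
    also have "\<dots> \<le> 1" using fF by (simp add: sum.delta')
    finally show "(\<Sum>x\<in>F. cmod (tunit x) * wt a b x) \<le> 1" .
  qed
  then show ?thesis by simp
qed

lemma wsum_zero: "wsum a b (\<lambda>_. 0)" by (simp add: wsum_def)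

lemma mwsum_mpow: "mwsum M \<Longrightarrow> mwsum (mpow M m)"
proof (cases m)
  case 0 then show ?thesis by (simp add: mwsum_def mident_def wsum_tunit wsum_zero)
next
  case (Suc k)
  assume "mwsum M" then show ?thesis using mpow_bound[of M k] Suc by blast
qed

lemma mtrace_bound:
  assumes M: "mwsum M"
  shows "wsum a b (mtrace M) \<and> wn a b (mtrace M) \<le> mn M"
proof -
  have "wsum a b (mtrace M) \<and> wn a b (mtrace M) \<le> (\<Sum>i\<in>UNIV. wn a b (M i i))"
    unfolding mtrace_def using wsum_sum[of UNIV "\<lambda>i. M i i"] M by (simp add: mwsum_def)
  moreover have "(\<Sum>i\<in>UNIV. wn a b (M i i)) \<le> mn M" unfolding mn_def
    by (intro sum_mono member_le_sum) (auto intro: wn_nn[OF a0 b0])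
  ultimately show ?thesis by linarith
qed

end

definition mdiff :: "'v mat \<Rightarrow> 'v mat \<Rightarrow> 'v mat" where
  "mdiff M N = (\<lambda>i j x. M i j x - N i j x)"

lemma tmult_diff_left: "tmult (\<lambda>x. S x - S' x) T x = tmult S T x - tmult S' T x"
  unfolding tmult_def by (simp add: sum_subtractf left_diff_distrib)

lemma tmult_diff_right: "tmult S (\<lambda>x. T x - T' x) x = tmult S T x - tmult S T' x"
  unfolding tmult_def by (simp add: sum_subtractf right_diff_distrib)

lemma mpow_diff_Suc:
  "mdiff (mpow G (Suc k)) (mpow F (Suc k)) i j x =
   mmult (mdiff (mpow G k) (mpow F k)) G i j x + mmult (mpow F k) (mdiff G F) i j x"
  unfolding mdiff_def by (simp add: mmult_def tmult_diff_left tmult_diff_right sum_subtractf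
      flip: sum.distrib)



lemma infsum_sum_fin:
  fixes f :: "'i \<Rightarrow> 'a \<Rightarrow> 'b::{topological_comm_monoid_add, t2_space}"
  assumes "finite I" "\<And>i. i \<in> I \<Longrightarrow> f i summable_on UNIV"
  shows "(\<lambda>x. \<Sum>i\<in>I. f i x) summable_on UNIV \<and> infsum (\<lambda>x. \<Sum>i\<in>I. f i x) UNIV = (\<Sum>i\<in>I. infsum (f i) UNIV)"
  using assms
proof (induction I rule: finite_induct)
  case empty then show ?case by simp
next
  case (insert i I)
  then have s: "f i summable_on UNIV" "(\<lambda>x. \<Sum>i\<in>I. f i x) summable_on UNIV" by auto
  show ?case using insert summable_on_add[OF s] infsum_add[OF s] by simp
qed

context fixes a b :: real assumes a0: "0 \<le> a" and b0: "0 \<le> b"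
begin

lemma msum_bound:
  fixes M :: "('v::finite) mat"
  assumes fb: "\<And>F. finite F \<Longrightarrow> (\<Sum>i\<in>UNIV. \<Sum>j\<in>UNIV. \<Sum>x\<in>F. cmod (M i j x) * wt a b x) \<le> B"
  shows "mwsum a b M \<and> mn a b M \<le> B"
proof -
  have nn: "0 \<le> cmod (M i j x) * wt a b x" for i j x by (simp add: wt_nn[OF a0 b0])
  have ent: "wsum a b (M i j)" for i j
  proof -
    have "wsum a b (M i j) \<and> wn a b (M i j) \<le> B"
    proof (rule wsumI[OF a0 b0])
      fix F :: "('v list \<times> 'v list) set" assume fF: "finite F"
      have "(\<Sum>x\<in>F. cmod (M i j x) * wt a b x) \<le> (\<Sum>j\<in>UNIV. \<Sum>x\<in>F. cmod (M i j x) * wt a b x)"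
        by (rule member_le_sum[of j UNIV "\<lambda>j. \<Sum>x\<in>F. cmod (M i j x) * wt a b x", simplified])
           (auto intro: sum_nonneg nn)
      also have "\<dots> \<le> (\<Sum>i\<in>UNIV. \<Sum>j\<in>UNIV. \<Sum>x\<in>F. cmod (M i j x) * wt a b x)"
        by (rule member_le_sum[of i UNIV "\<lambda>i. \<Sum>j\<in>UNIV. \<Sum>x\<in>F. cmod (M i j x) * wt a b x", simplified])
           (auto intro!: sum_nonneg nn)
      also have "\<dots> \<le> B" using fb fF .
      finally show "(\<Sum>x\<in>F. cmod (M i j x) * wt a b x) \<le> B" .
    qed
    then show ?thesis by simp
  qed
  define G where "G x = (\<Sum>i\<in>UNIV. \<Sum>j\<in>UNIV. cmod (M i j x) * wt a b x)" for x
  have "G summable_on UNIV \<and> infsum G UNIV \<le> B"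
  proof (rule fb_summable)
    show "0 \<le> G x" for x unfolding G_def by (intro sum_nonneg nn)
    fix F :: "('v list \<times> 'v list) set" assume "finite F"
    have "sum G F = (\<Sum>i\<in>UNIV. \<Sum>j\<in>UNIV. \<Sum>x\<in>F. cmod (M i j x) * wt a b x)"
      unfolding G_def by (subst sum.swap, rule sum.cong[OF refl], rule sum.swap)
    then show "sum G F \<le> B" using fb \<open>finite F\<close> by simp
  qed
  moreover have "infsum G UNIV = mn a b M"
  proof -
    have "infsum G UNIV = (\<Sum>i\<in>UNIV. infsum (\<lambda>x. \<Sum>j\<in>UNIV. cmod (M i j x) * wt a b x) UNIV)"
      unfolding G_def
    proof (rule conjunct2[OF infsum_sum_fin])
      fix i
      show "(\<lambda>x. \<Sum>j\<in>UNIV. cmod (M i j x) * wt a b x) summable_on UNIV"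
        by (rule conjunct1[OF infsum_sum_fin]) (use ent in \<open>auto simp: wsum_def\<close>)
    qed simp
    also have "\<dots> = (\<Sum>i\<in>UNIV. \<Sum>j\<in>UNIV. wn a b (M i j))"
      unfolding wn_def
    proof (rule sum.cong[OF refl])
      fix i show "(\<Sum>\<^sub>\<infinity>x. \<Sum>j\<in>UNIV. cmod (M i j x) * wt a b x) = (\<Sum>j\<in>UNIV. \<Sum>\<^sub>\<infinity>x. cmod (M i j x) * wt a b x)"
        by (rule conjunct2[OF infsum_sum_fin]) (use ent in \<open>auto simp: wsum_def\<close>)
    qed
    finally show ?thesis using a0 b0 by (simp add: mn_def)
  qed
  ultimately show ?thesis using ent a0 b0 by (simp add: mwsum_def)
qed

lemma JD_bound:
  fixes g :: "('v::finite) ser" and K A :: real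
  assumes S: "\<And>d. (\<Sum>t<d - 1. a ^ t * b ^ (d - 2 - t)) \<le> K * A ^ d"
    and gin: "inCompl A g" and A0: "0 \<le> A" and K0: "0 \<le> K"
  shows "mwsum a b (JD (sigmaop g)) \<and> mn a b (JD (sigmaop g)) \<le> K * normA A g"
proof (rule msum_bound)
  fix F :: "('v list \<times> 'v list) set" assume fF: "finite F"
  define n where "n x = length (fst x) + length (snd x) + 1" for x :: "'v list \<times> 'v list"
  define D where "D = (SIGMA x:F. (UNIV::'v set) \<times> (UNIV::'v set) \<times> {..n x})"
  define \<phi> where "\<phi> = (\<lambda>(x :: 'v list \<times> 'v list, i :: 'v, j :: 'v, k :: nat).
     let w' = fst x @ [j] @ snd x in (drop k w' @ [i] @ take k w', length w' - k, length (fst x)))"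
  define \<psi> where "\<psi> = (\<lambda>(u :: 'v list, s :: nat, t :: nat).
     let w' = drop (Suc s) u @ take s u in ((take t w', drop (Suc t) w'), (u ! s, w' ! t, length w' - s)))"
  define h where "h = (\<lambda>(u :: 'v list, s :: nat, t :: nat). cmod (g u) / real (length u) * a ^ t * b ^ (length u - 2 - t))"
  have fD: "finite D" unfolding D_def using fF by auto
  have hnn: "0 \<le> h y" for y using a0 b0 by (cases y) (simp add: h_def)
  have inj: "inj_on \<phi> D"
  proof (rule inj_on_inverseI[where g = \<psi>])
    fix z assume "z \<in> D"
    then obtain p r i j k where z: "z = ((p, r), i, j, k)" "k \<le> length p + length r + 1"
      unfolding D_def n_def by auto
    define w' where "w' = p @ [j] @ r"
    have kw: "k \<le> length w'" using z by (simp add: w'_def)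
    have 1: "(drop k w' @ [i] @ take k w') ! (length w' - k) = i" using kw by (simp add: nth_append)
    have 2: "drop (Suc (length w' - k)) (drop k w' @ [i] @ take k w') = take k w'" using kw by simp
    have 3: "take (length w' - k) (drop k w' @ [i] @ take k w') = drop k w'" using kw by simp
    have 4: "take k w' @ drop k w' = w'" by simp
    have e: "\<phi> z = (drop k w' @ [i] @ take k w', length w' - k, length p)"
      by (simp add: z \<phi>_def w'_def)
    have "\<psi> (\<phi> z) = ((take (length p) w', drop (Suc (length p)) w'), (i, w' ! length p, k))"
    proof -
      have 5: "drop (Suc (length w' - k)) (drop k w' @ [i] @ take k w') @ take (length w' - k) (drop k w' @ [i] @ take k w') = w'"
        unfolding 2 3 by simp
      have 6: "length w' - (length w' - k) = k" using kw by simp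
      show ?thesis unfolding e \<psi>_def Let_def prod.case 5 6 1 by simp
    qed
    then show "\<psi> (\<phi> z) = z" by (simp add: w'_def z)
  qed
  have pt: "(\<Sum>i\<in>UNIV. \<Sum>j\<in>UNIV. cmod (JD (sigmaop g) i j x) * wt a b x)
      \<le> (\<Sum>(i,j,k)\<in>(UNIV::'v set) \<times> (UNIV::'v set) \<times> {..n x}. h (\<phi> (x, i, j, k)))" for x
  proof -
    obtain p r where x: "x = (p, r)" by (cases x)
    have "cmod (JD (sigmaop g) i j x) * wt a b x \<le> (\<Sum>k\<in>{..n x}. h (\<phi> (x, i, j, k)))" for i j
    proof -
      have L: "length (fst x @ [j] @ snd x) = n x" by (simp add: n_def)
      have "JD (sigmaop g) i j x = (\<Sum>k\<in>{..n x}. sigmaop g (drop k (fst x @ [j] @ snd x) @ [i] @ take k (fst x @ [j] @ snd x)))"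
        by (simp only: JD_def ncderiv_def cycD_def L atMost_def)
      then have "cmod (JD (sigmaop g) i j x) * wt a b x \<le>
          (\<Sum>k\<in>{..n x}. cmod (sigmaop g (drop k (p @ [j] @ r) @ [i] @ take k (p @ [j] @ r)))) * wt a b x"
        by (intro mult_right_mono wt_nn[OF a0 b0]) (simp add: norm_sum x)
      also have "\<dots> = (\<Sum>k\<in>{..n x}. h (\<phi> (x, i, j, k)))"
        unfolding sum_distrib_right
      proof (intro sum.cong refl)
        fix k assume k: "k \<in> {..n x}"
        define w' where "w' = p @ [j] @ r"
        define u where "u = drop k w' @ [i] @ take k w'"
        have lu: "length u = length p + length r + 2" using k by (simp add: u_def w'_def n_def x)
        have ph: "\<phi> (x, i, j, k) = (u, length w' - k, length p)"
          unfolding \<phi>_def x u_def w'_def by simp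
        have "u \<noteq> []" using lu by auto
        then have "cmod (sigmaop g u) = cmod (g u) / real (length u)"
          by (simp add: sigmaop_def norm_divide norm_of_nat)
        then show "cmod (sigmaop g (drop k (p @ [j] @ r) @ [i] @ take k (p @ [j] @ r))) * wt a b x
          = h (\<phi> (x, i, j, k))"
          unfolding w'_def[symmetric] u_def[symmetric] ph h_def using lu by (simp add: x wt_def)
      qed
      finally show ?thesis .
    qed
    then have "(\<Sum>i\<in>UNIV. \<Sum>j\<in>UNIV. cmod (JD (sigmaop g) i j x) * wt a b x)
       \<le> (\<Sum>i\<in>UNIV. \<Sum>j\<in>UNIV. \<Sum>k\<in>{..n x}. h (\<phi> (x, i, j, k)))"
      by (intro sum_mono)
    also have "\<dots> = (\<Sum>(i,j,k)\<in>(UNIV::'v set) \<times> (UNIV::'v set) \<times> {..n x}. h (\<phi> (x, i, j, k)))"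
      by (simp add: sum.cartesian_product)
    finally show ?thesis .
  qed
  have "(\<Sum>i\<in>UNIV. \<Sum>j\<in>UNIV. \<Sum>x\<in>F. cmod (JD (sigmaop g) i j x) * wt a b x)
      = (\<Sum>x\<in>F. \<Sum>i\<in>UNIV. \<Sum>j\<in>UNIV. cmod (JD (sigmaop g) i j x) * wt a b x)"
    by (subst (2) sum.swap, rule sum.cong[OF refl], rule sum.swap)
  also have "\<dots> \<le> (\<Sum>x\<in>F. \<Sum>(i,j,k)\<in>(UNIV::'v set) \<times> (UNIV::'v set) \<times> {..n x}. h (\<phi> (x, i, j, k)))"
    by (rule sum_mono) (rule pt)
  also have "\<dots> = (\<Sum>z\<in>D. h (\<phi> z))"
    unfolding D_def using sum.Sigma[of F "\<lambda>x. (UNIV::'v set) \<times> (UNIV::'v set) \<times> {..n x}"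
        "\<lambda>x ijk. h (\<phi> (x, ijk))"] fF by (simp add: split_def)
  also have "\<dots> = (\<Sum>y\<in>\<phi> ` D. h y)" using sum.reindex[OF inj, of h] by simp
  also have "\<dots> \<le> (\<Sum>y\<in>(SIGMA u:fst ` \<phi> ` D. {..<length u} \<times> {..<length u - 1}). h y)"
  proof (rule sum_mono2)
    show "finite (SIGMA u:fst ` \<phi> ` D. {..<length u} \<times> {..<length u - 1})" using fD by auto
    show "\<phi> ` D \<subseteq> (SIGMA u:fst ` \<phi> ` D. {..<length u} \<times> {..<length u - 1})"
    proof
      fix y assume "y \<in> \<phi> ` D"
      then obtain p r i j k where z: "((p, r), i, j, k) \<in> D" "y = \<phi> ((p, r), i, j, k)" by auto
      have k: "k \<le> length p + length r + 1" using z(1) unfolding D_def n_def by auto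
      have "fst y \<in> fst ` \<phi> ` D" using \<open>y \<in> \<phi> ` D\<close> by auto
      moreover have "fst (snd y) < length (fst y)" "snd (snd y) < length (fst y) - 1"
        using z(2) k by (auto simp: \<phi>_def Let_def)
      ultimately show "y \<in> (SIGMA u:fst ` \<phi> ` D. {..<length u} \<times> {..<length u - 1})"
        by (cases y) auto
    qed
    show "0 \<le> h y" for y by (rule hnn)
  qed
  also have "\<dots> = (\<Sum>u\<in>fst ` \<phi> ` D. \<Sum>s<length u. \<Sum>t<length u - 1. h (u, s, t))"
    using fD sum.Sigma[of "fst ` \<phi> ` D" "\<lambda>u. {..<length u} \<times> {..<length u - 1}" "\<lambda>u st. h (u, st)"]
    by (simp add: sum.cartesian_product split_def)
  also have "\<dots> = (\<Sum>u\<in>fst ` \<phi> ` D. cmod (g u) * (\<Sum>t<length u - 1. a ^ t * b ^ (length u - 2 - t)))"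
  proof (rule sum.cong[OF refl])
    fix u :: "'v list"
    show "(\<Sum>s<length u. \<Sum>t<length u - 1. h (u, s, t)) = cmod (g u) * (\<Sum>t<length u - 1. a ^ t * b ^ (length u - 2 - t))"
      by (cases "u = []") (simp_all add: h_def sum_distrib_left mult.assoc)
  qed
  also have "\<dots> \<le> (\<Sum>u\<in>fst ` \<phi> ` D. K * (cmod (g u) * A ^ length u))"
  proof (rule sum_mono)
    fix u :: "'v list"
    have "cmod (g u) * (\<Sum>t<length u - 1. a ^ t * b ^ (length u - 2 - t)) \<le> cmod (g u) * (K * A ^ length u)"
      by (rule mult_left_mono[OF S]) simp
    then show "cmod (g u) * (\<Sum>t<length u - 1. a ^ t * b ^ (length u - 2 - t)) \<le> K * (cmod (g u) * A ^ length u)"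
      by (simp add: mult.left_commute)
  qed
  also have "\<dots> = K * (\<Sum>u\<in>fst ` \<phi> ` D. cmod (g u) * A ^ length u)" by (simp add: sum_distrib_left)
  also have "\<dots> \<le> K * normA A g"
  proof (rule mult_left_mono)
    show "(\<Sum>u\<in>fst ` \<phi> ` D. cmod (g u) * A ^ length u) \<le> normA A g"
      unfolding normA_def by (rule fs_le_infsum) (use gin A0 fD in \<open>auto simp: inCompl_def\<close>)
    show "0 \<le> K" by (rule K0)
  qed
  finally show "(\<Sum>i\<in>UNIV. \<Sum>j\<in>UNIV. \<Sum>x\<in>F. cmod (JD (sigmaop g) i j x) * wt a b x) \<le> K * normA A g" .
qed

end


lemma row_summable:
  fixes f :: "'a \<times> 'a \<Rightarrow> real"
  assumes "f summable_on UNIV"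
  shows "(\<lambda>q. f (w, q)) summable_on UNIV" "(\<lambda>p. f (p, w)) summable_on UNIV"
proof -
  have "f summable_on (Pair w ` UNIV)" by (rule summable_on_subset_banach[OF assms]) auto
  then show "(\<lambda>q. f (w, q)) summable_on UNIV"
    using summable_on_reindex[of "Pair w" UNIV f] by (simp add: inj_on_def o_def)
  have "f summable_on ((\<lambda>p. (p, w)) ` UNIV)" by (rule summable_on_subset_banach[OF assms]) auto
  then show "(\<lambda>p. f (p, w)) summable_on UNIV"
    using summable_on_reindex[of "\<lambda>p. (p, w)" UNIV f] by (simp add: inj_on_def o_def)
qed

lemma rows_le:
  fixes F :: "'a \<times> 'a \<Rightarrow> real"
  assumes s: "F summable_on UNIV" and nn: "\<And>x. 0 \<le> F x" and fW: "finite W"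
  shows "(\<Sum>w\<in>W. \<Sum>\<^sub>\<infinity>q. F (w, q)) \<le> infsum F UNIV"
    "(\<Sum>w\<in>W. \<Sum>\<^sub>\<infinity>p. F (p, w)) \<le> infsum F UNIV"
proof -
  have "(\<Sum>w\<in>W. \<Sum>\<^sub>\<infinity>q. F (w, q)) = (\<Sum>\<^sub>\<infinity>q. \<Sum>w\<in>W. F (w, q))"
    using infsum_sum_fin[of W "\<lambda>w q. F (w, q)"] fW row_summable[OF s] by simp
  also have "\<dots> \<le> infsum F UNIV"
  proof (rule infsum_le_finite_sums)
    show "(\<lambda>q. \<Sum>w\<in>W. F (w, q)) summable_on UNIV"
      using infsum_sum_fin[of W "\<lambda>w q. F (w, q)"] fW row_summable[OF s] by simp
    fix Q :: "'a set" assume "finite Q"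
    have "(\<Sum>q\<in>Q. \<Sum>w\<in>W. F (w, q)) = (\<Sum>z\<in>W \<times> Q. F z)"
      by (subst sum.swap) (simp add: sum.cartesian_product)
    also have "\<dots> \<le> infsum F UNIV" by (rule fs_le_infsum) (use s nn fW \<open>finite Q\<close> in auto)
    finally show "(\<Sum>q\<in>Q. \<Sum>w\<in>W. F (w, q)) \<le> infsum F UNIV" .
  qed
  finally show "(\<Sum>w\<in>W. \<Sum>\<^sub>\<infinity>q. F (w, q)) \<le> infsum F UNIV" .
  have "(\<Sum>w\<in>W. \<Sum>\<^sub>\<infinity>p. F (p, w)) = (\<Sum>\<^sub>\<infinity>p. \<Sum>w\<in>W. F (p, w))"
    using infsum_sum_fin[of W "\<lambda>w p. F (p, w)"] fW row_summable[OF s] by simp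
  also have "\<dots> \<le> infsum F UNIV"
  proof (rule infsum_le_finite_sums)
    show "(\<lambda>p. \<Sum>w\<in>W. F (p, w)) summable_on UNIV"
      using infsum_sum_fin[of W "\<lambda>w p. F (p, w)"] fW row_summable[OF s] by simp
    fix Q :: "'a set" assume "finite Q"
    have "(\<Sum>p\<in>Q. \<Sum>w\<in>W. F (p, w)) = (\<Sum>z\<in>Q \<times> W. F z)"
      by (simp add: sum.cartesian_product)
    also have "\<dots> \<le> infsum F UNIV" by (rule fs_le_infsum) (use s nn fW \<open>finite Q\<close> in auto)
    finally show "(\<Sum>p\<in>Q. \<Sum>w\<in>W. F (p, w)) \<le> infsum F UNIV" .
  qed
  finally show "(\<Sum>w\<in>W. \<Sum>\<^sub>\<infinity>p. F (p, w)) \<le> infsum F UNIV" .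
qed

context fixes tau :: "'v list \<Rightarrow> complex" and C0 A :: real
  assumes tau_bd: "\<And>q. cmod (tau q) \<le> C0 ^ length q" and C00: "0 \<le> C0" and A0: "0 < A"
begin

lemma tr_row:
  fixes T :: "'v ten"
  assumes T: "wsum A C0 T"
  shows "(\<lambda>q. T (w, q) * tau q) summable_on UNIV \<and>
    A ^ length w * cmod (\<Sum>\<^sub>\<infinity>q. T (w, q) * tau q) \<le> (\<Sum>\<^sub>\<infinity>q. cmod (T (w, q)) * wt A C0 (w, q))"
proof -
  have s1: "(\<lambda>q. cmod (T (w, q)) * wt A C0 (w, q)) summable_on UNIV"
    using row_summable(1)[OF T[unfolded wsum_def]] by simp
  have s2: "(\<lambda>q. cmod (T (w, q)) * C0 ^ length q) summable_on UNIV"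
    using summable_on_cmult_right[OF s1, of "1 / A ^ length w"] A0 by (simp add: wt_def)
  have le: "norm (T (w, q) * tau q) \<le> cmod (T (w, q)) * C0 ^ length q" for q
    using tau_bd[of q] C00 by (simp add: norm_mult mult_left_mono)
  have as: "(\<lambda>q. norm (T (w, q) * tau q)) summable_on UNIV"
    by (rule summable_on_comparison_test[OF s2]) (use le in auto)
  have "cmod (\<Sum>\<^sub>\<infinity>q. T (w, q) * tau q) \<le> (\<Sum>\<^sub>\<infinity>q. norm (T (w, q) * tau q))"
    by (rule norm_infsum_bound[OF as])
  also have "\<dots> \<le> (\<Sum>\<^sub>\<infinity>q. cmod (T (w, q)) * C0 ^ length q)"
    by (rule infsum_mono[OF as s2]) (use le C00 in simp)
  finally have "A ^ length w * cmod (\<Sum>\<^sub>\<infinity>q. T (w, q) * tau q) \<le> A ^ length w * (\<Sum>\<^sub>\<infinity>q. cmod (T (w, q)) * C0 ^ length q)"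
    using A0 by (simp add: mult_left_mono)
  also have "\<dots> = (\<Sum>\<^sub>\<infinity>q. cmod (T (w, q)) * wt A C0 (w, q))"
    by (subst infsum_cmult_right[symmetric]) (use s2 in \<open>auto simp: wt_def mult_ac\<close>)
  finally show ?thesis using abs_summable_summable[OF as] by simp
qed

lemma tr_col:
  fixes T :: "'v ten"
  assumes T: "wsum C0 A T"
  shows "(\<lambda>p. T (p, w) * tau p) summable_on UNIV \<and>
    A ^ length w * cmod (\<Sum>\<^sub>\<infinity>p. T (p, w) * tau p) \<le> (\<Sum>\<^sub>\<infinity>p. cmod (T (p, w)) * wt C0 A (p, w))"
proof -
  have s1: "(\<lambda>p. cmod (T (p, w)) * wt C0 A (p, w)) summable_on UNIV"
    using row_summable(2)[OF T[unfolded wsum_def]] by simp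
  have s2: "(\<lambda>p. cmod (T (p, w)) * C0 ^ length p) summable_on UNIV"
    using summable_on_cmult_right[OF s1, of "1 / A ^ length w"] A0 by (simp add: wt_def)
  have le: "norm (T (p, w) * tau p) \<le> cmod (T (p, w)) * C0 ^ length p" for p
    using tau_bd[of p] C00 by (simp add: norm_mult mult_left_mono)
  have as: "(\<lambda>p. norm (T (p, w) * tau p)) summable_on UNIV"
    by (rule summable_on_comparison_test[OF s2]) (use le in auto)
  have "cmod (\<Sum>\<^sub>\<infinity>p. T (p, w) * tau p) \<le> (\<Sum>\<^sub>\<infinity>p. norm (T (p, w) * tau p))"
    by (rule norm_infsum_bound[OF as])
  also have "\<dots> \<le> (\<Sum>\<^sub>\<infinity>p. cmod (T (p, w)) * C0 ^ length p)"
    by (rule infsum_mono[OF as s2]) (use le C00 in simp)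
  finally have "A ^ length w * cmod (\<Sum>\<^sub>\<infinity>p. T (p, w) * tau p) \<le> A ^ length w * (\<Sum>\<^sub>\<infinity>p. cmod (T (p, w)) * C0 ^ length p)"
    using A0 by (simp add: mult_left_mono)
  also have "\<dots> = (\<Sum>\<^sub>\<infinity>p. cmod (T (p, w)) * wt C0 A (p, w))"
    by (subst infsum_cmult_right[symmetric]) (use s2 in \<open>auto simp: wt_def mult_ac\<close>)
  finally show ?thesis using abs_summable_summable[OF as] by simp
qed

lemma trmap_bound:
  fixes T :: "'v ten"
  assumes T1: "wsum A C0 T" and T2: "wsum C0 A T"
  shows "inCompl A (trmap tau T) \<and> normA A (trmap tau T) \<le> wn A C0 T + wn C0 A T"
proof -
  have "(\<lambda>w. cmod (trmap tau T w) * A ^ length w) summable_on UNIV \<and>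
        infsum (\<lambda>w. cmod (trmap tau T w) * A ^ length w) UNIV \<le> wn A C0 T + wn C0 A T"
  proof (rule fb_summable)
    show "0 \<le> cmod (trmap tau T w) * A ^ length w" for w using A0 by simp
    fix W :: "'v list set" assume fW: "finite W"
    have "(\<Sum>w\<in>W. cmod (trmap tau T w) * A ^ length w) \<le>
       (\<Sum>w\<in>W. (\<Sum>\<^sub>\<infinity>q. cmod (T (w, q)) * wt A C0 (w, q)) + (\<Sum>\<^sub>\<infinity>p. cmod (T (p, w)) * wt C0 A (p, w)))"
    proof (rule sum_mono)
      fix w
      have "cmod (trmap tau T w) * A ^ length w \<le>
          A ^ length w * cmod (\<Sum>\<^sub>\<infinity>q. T (w, q) * tau q) + A ^ length w * cmod (\<Sum>\<^sub>\<infinity>p. T (p, w) * tau p)"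
      proof -
        have "cmod (trmap tau T w) \<le> cmod (\<Sum>\<^sub>\<infinity>q. T (w, q) * tau q) + cmod (\<Sum>\<^sub>\<infinity>p. T (p, w) * tau p)"
          unfolding trmap_def by (rule norm_triangle_ineq)
        from mult_right_mono[OF this, of "A ^ length w"] A0 show ?thesis by (simp add: algebra_simps)
      qed
      then show "cmod (trmap tau T w) * A ^ length w \<le>
          (\<Sum>\<^sub>\<infinity>q. cmod (T (w, q)) * wt A C0 (w, q)) + (\<Sum>\<^sub>\<infinity>p. cmod (T (p, w)) * wt C0 A (p, w))"
        using tr_row[OF T1, of w] tr_col[OF T2, of w] by linarith
    qed
    also have "\<dots> = (\<Sum>w\<in>W. \<Sum>\<^sub>\<infinity>q. cmod (T (w, q)) * wt A C0 (w, q)) + (\<Sum>w\<in>W. \<Sum>\<^sub>\<infinity>p. cmod (T (p, w)) * wt C0 A (p, w))"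
      by (rule sum.distrib)
    also have "\<dots> \<le> wn A C0 T + wn C0 A T"
      unfolding wn_def
      by (intro add_mono rows_le[where F = "\<lambda>x. cmod (T x) * wt _ _ x", simplified])
         (use T1 T2 fW A0 C00 in \<open>auto simp: wsum_def wt_nn\<close>)
    finally show "(\<Sum>w\<in>W. cmod (trmap tau T w) * A ^ length w) \<le> wn A C0 T + wn C0 A T" .
  qed
  then show ?thesis by (simp add: inCompl_def normA_def)
qed

lemma trmap_lin:
  fixes T :: "'i \<Rightarrow> 'v ten"
  assumes fI: "finite I" and T1: "\<And>i. i \<in> I \<Longrightarrow> wsum A C0 (T i)" and T2: "\<And>i. i \<in> I \<Longrightarrow> wsum C0 A (T i)"
  shows "trmap tau (\<lambda>x. \<Sum>i\<in>I. c i * T i x) w = (\<Sum>i\<in>I. c i * trmap tau (T i) w)"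
proof -
  have "(\<Sum>\<^sub>\<infinity>q. (\<Sum>i\<in>I. c i * T i (w, q)) * tau q) = (\<Sum>i\<in>I. c i * (\<Sum>\<^sub>\<infinity>q. T i (w, q) * tau q))"
  proof -
    have "(\<Sum>\<^sub>\<infinity>q. (\<Sum>i\<in>I. c i * T i (w, q)) * tau q) = (\<Sum>\<^sub>\<infinity>q. \<Sum>i\<in>I. c i * (T i (w, q) * tau q))"
      by (simp add: sum_distrib_right mult.assoc)
    also have "\<dots> = (\<Sum>i\<in>I. \<Sum>\<^sub>\<infinity>q. c i * (T i (w, q) * tau q))"
      by (rule conjunct2[OF infsum_sum_fin[OF fI]])
         (use tr_row[OF T1] in \<open>auto intro: summable_on_cmult_right\<close>)
    also have "\<dots> = (\<Sum>i\<in>I. c i * (\<Sum>\<^sub>\<infinity>q. T i (w, q) * tau q))"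
      by (intro sum.cong refl infsum_cmult_right) (use tr_row[OF T1] in auto)
    finally show ?thesis .
  qed
  moreover have "(\<Sum>\<^sub>\<infinity>p. (\<Sum>i\<in>I. c i * T i (p, w)) * tau p) = (\<Sum>i\<in>I. c i * (\<Sum>\<^sub>\<infinity>p. T i (p, w) * tau p))"
  proof -
    have "(\<Sum>\<^sub>\<infinity>p. (\<Sum>i\<in>I. c i * T i (p, w)) * tau p) = (\<Sum>\<^sub>\<infinity>p. \<Sum>i\<in>I. c i * (T i (p, w) * tau p))"
      by (simp add: sum_distrib_right mult.assoc)
    also have "\<dots> = (\<Sum>i\<in>I. \<Sum>\<^sub>\<infinity>p. c i * (T i (p, w) * tau p))"
      by (rule conjunct2[OF infsum_sum_fin[OF fI]])
         (use tr_col[OF T2] in \<open>auto intro: summable_on_cmult_right\<close>)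
    also have "\<dots> = (\<Sum>i\<in>I. c i * (\<Sum>\<^sub>\<infinity>p. T i (p, w) * tau p))"
      by (intro sum.cong refl infsum_cmult_right) (use tr_col[OF T2] in auto)
    finally show ?thesis .
  qed
  ultimately show ?thesis unfolding trmap_def by (simp add: sum.distrib distrib_left)
qed

end

lemma ser_sum_bound:
  fixes F :: "nat \<Rightarrow> 'v ser"
  assumes A0: "0 < A" and Fin: "\<And>m. inCompl A (F m)" and B: "\<And>N. (\<Sum>m<N. normA A (F m)) \<le> B"
  shows "(\<forall>w. summable (\<lambda>m. F m w)) \<and> inCompl A (\<lambda>w. \<Sum>m. F m w) \<and> normA A (\<lambda>w. \<Sum>m. F m w) \<le> B"
proof -
  have pt: "cmod (F m w) * A ^ length w \<le> normA A (F m)" for m w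
    using fs_le_infsum[of "\<lambda>w. cmod (F m w) * A ^ length w" "{w}"] Fin[of m] A0
    by (simp add: inCompl_def normA_def)
  have sA: "summable (\<lambda>m. cmod (F m w) * A ^ length w)" for w
  proof (rule summableI_nonneg_bounded)
    show "0 \<le> cmod (F m w) * A ^ length w" for m using A0 by simp
    show "(\<Sum>m<n. cmod (F m w) * A ^ length w) \<le> B" for n
      using sum_mono[of "{..<n}" "\<lambda>m. cmod (F m w) * A ^ length w" "\<lambda>m. normA A (F m)"] pt B[of n] by force
  qed
  have sn: "summable (\<lambda>m. cmod (F m w))" for w
    using summable_mult2[OF sA[of w], of "1 / A ^ length w"] A0 by simp
  have s: "summable (\<lambda>m. F m w)" for w by (rule summable_norm_cancel) (use sn in simp)
  have "(\<lambda>w. cmod (\<Sum>m. F m w) * A ^ length w) summable_on UNIV \<and>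
       infsum (\<lambda>w. cmod (\<Sum>m. F m w) * A ^ length w) UNIV \<le> B"
  proof (rule fb_summable)
    show "0 \<le> cmod (\<Sum>m. F m w) * A ^ length w" for w using A0 by simp
    fix W :: "'v list set" assume fW: "finite W"
    have "(\<Sum>w\<in>W. cmod (\<Sum>m. F m w) * A ^ length w) \<le> (\<Sum>w\<in>W. \<Sum>m. cmod (F m w) * A ^ length w)"
    proof (rule sum_mono)
      fix w
      have "cmod (\<Sum>m. F m w) * A ^ length w \<le> (\<Sum>m. cmod (F m w)) * A ^ length w"
        by (rule mult_right_mono[OF summable_norm]) (use sn A0 in auto)
      also have "\<dots> = (\<Sum>m. cmod (F m w) * A ^ length w)" using suminf_mult2[OF sn[of w], of "A ^ length w"] by simp
      finally show "cmod (\<Sum>m. F m w) * A ^ length w \<le> (\<Sum>m. cmod (F m w) * A ^ length w)" .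
    qed
    also have "\<dots> = (\<Sum>m. \<Sum>w\<in>W. cmod (F m w) * A ^ length w)"
      by (rule suminf_sum[symmetric]) (rule sA)
    also have "\<dots> \<le> B"
    proof (rule suminf_le_const)
      show "summable (\<lambda>m. \<Sum>w\<in>W. cmod (F m w) * A ^ length w)" by (rule summable_sum) (rule sA)
      fix n
      have "(\<Sum>m<n. \<Sum>w\<in>W. cmod (F m w) * A ^ length w) \<le> (\<Sum>m<n. normA A (F m))"
      proof (rule sum_mono)
        fix m show "(\<Sum>w\<in>W. cmod (F m w) * A ^ length w) \<le> normA A (F m)"
          unfolding normA_def by (rule fs_le_infsum) (use Fin[of m] A0 fW in \<open>auto simp: inCompl_def\<close>)
      qed
      then show "(\<Sum>m<n. \<Sum>w\<in>W. cmod (F m w) * A ^ length w) \<le> B" using B[of n] by linarith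
    qed
    finally show "(\<Sum>w\<in>W. cmod (\<Sum>m. F m w) * A ^ length w) \<le> B" .
  qed
  then show ?thesis using s by (simp add: inCompl_def normA_def)
qed

lemma normA_nn: "0 \<le> A \<Longrightarrow> 0 \<le> normA A P"
  unfolding normA_def by (rule infsum_nonneg) simp

lemma geo_half_eq: "(\<Sum>t<n. (1/2::real) ^ t) = 2 - 2 * (1/2) ^ n"
  by (induction n) auto

lemma geo_half: "(\<Sum>t<n. (1/2::real) ^ t) \<le> 2"
  unfolding geo_half_eq by simp

lemma Sbound:
  fixes C0 A :: real
  assumes C00: "0 \<le> C0" and A0: "0 < A" and CA: "C0 \<le> A / 2"
  shows "(\<Sum>t<d - 1. C0 ^ t * A ^ (d - 2 - t)) \<le> 2 / A^2 * A ^ d"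
    "(\<Sum>t<d - 1. A ^ t * C0 ^ (d - 2 - t)) \<le> 2 / A^2 * A ^ d"
proof -
  show 1: "(\<Sum>t<d - 1. C0 ^ t * A ^ (d - 2 - t)) \<le> 2 / A^2 * A ^ d"
  proof (cases "d \<ge> 2")
    case False
    then have "d - 1 = 0" by simp
    then show ?thesis using A0 by simp
  next
    case True
    have "(\<Sum>t<d - 1. C0 ^ t * A ^ (d - 2 - t)) \<le> (\<Sum>t<d - 1. A ^ (d - 2) * (1/2) ^ t)"
    proof (rule sum_mono)
      fix t assume "t \<in> {..<d - 1}"
      then have t: "t \<le> d - 2" by auto
      have "C0 ^ t \<le> (A / 2) ^ t" by (rule power_mono[OF CA C00])
      then have "C0 ^ t * A ^ (d - 2 - t) \<le> (A / 2) ^ t * A ^ (d - 2 - t)"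
        using A0 by (simp add: mult_right_mono)
      also have "\<dots> = A ^ (t + (d - 2 - t)) * (1/2) ^ t"
        by (simp add: power_divide power_add)
      also have "\<dots> = A ^ (d - 2) * (1/2) ^ t"
      proof -
        have "t + (d - 2 - t) = d - 2" using t by arith
        then show ?thesis by simp
      qed
      finally show "C0 ^ t * A ^ (d - 2 - t) \<le> A ^ (d - 2) * (1/2) ^ t" .
    qed
    also have "\<dots> = A ^ (d - 2) * (\<Sum>t<d - 1. (1/2) ^ t)" by (simp add: sum_distrib_left)
    also have "\<dots> \<le> A ^ (d - 2) * 2" by (rule mult_left_mono[OF geo_half]) (use A0 in simp)
    also have "\<dots> = 2 / A^2 * A ^ d"
    proof -
      have "d = 2 + (d - 2)" using True by arith
      then have "A ^ d = A ^ 2 * A ^ (d - 2)" by (metis power_add)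
      then show ?thesis using A0 by simp
    qed
    finally show ?thesis .
  qed
  have "(\<Sum>t<d - 1. A ^ t * C0 ^ (d - 2 - t)) = (\<Sum>t<d - 1. C0 ^ t * A ^ (d - 2 - t))"
  proof -
    have "(\<Sum>t<d - 1. A ^ t * C0 ^ (d - 2 - t)) = (\<Sum>t<d - 1. A ^ (d - 1 - Suc t) * C0 ^ (d - 2 - (d - 1 - Suc t)))"
      by (rule sum.nat_diff_reindex[symmetric])
    also have "\<dots> = (\<Sum>t<d - 1. C0 ^ t * A ^ (d - 2 - t))"
    proof (rule sum.cong[OF refl])
      fix t assume "t \<in> {..<d - 1}"
      then have e1: "d - 1 - Suc t = d - 2 - t" and e2: "d - 2 - (d - 2 - t) = t" by auto
      show "A ^ (d - 1 - Suc t) * C0 ^ (d - 2 - (d - 1 - Suc t)) = C0 ^ t * A ^ (d - 2 - t)"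
        unfolding e1 e2 by (simp add: mult.commute)
    qed
    finally show ?thesis .
  qed
  then show "(\<Sum>t<d - 1. A ^ t * C0 ^ (d - 2 - t)) \<le> 2 / A^2 * A ^ d" using 1 by simp
qed

lemma JD_diff: "JD (sigmaop g) i j x - JD (sigmaop f) i j x = JD (sigmaop (\<lambda>w. g w - f w)) i j x"
  unfolding JD_def ncderiv_def cycD_def sigmaop_def by (simp add: sum_subtractf diff_divide_distrib)



lemma inCompl_scale: "inCompl A P \<Longrightarrow> inCompl A (\<lambda>w. c * P w)"
  unfolding inCompl_def using summable_on_cmult_right[of "\<lambda>w. cmod (P w) * A ^ length w" UNIV "cmod c"]
  by (simp add: norm_mult mult.assoc)

lemma normA_scale: "inCompl A P \<Longrightarrow> normA A (\<lambda>w. c * P w) = cmod c * normA A P"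
  unfolding normA_def inCompl_def
  by (subst infsum_cmult_right[symmetric]) (auto simp: norm_mult mult.assoc)

lemma normA_uminus: "normA A (\<lambda>w. - P w) = normA A P"
  unfolding normA_def by simp

lemma normA_commute: "normA A (\<lambda>w. f w - g w) = normA A (\<lambda>w. g w - f w)"
  unfolding normA_def by (simp add: norm_minus_commute)

lemma inCompl_diff:
  assumes "inCompl A f" "inCompl A g" "0 \<le> A"
  shows "inCompl A (\<lambda>w. f w - g w)"
  unfolding inCompl_def
proof (rule summable_on_comparison_test)
  show "(\<lambda>w. cmod (f w) * A ^ length w + cmod (g w) * A ^ length w) summable_on UNIV"
    using assms by (intro summable_on_add) (auto simp: inCompl_def)
  show "cmod (f w - g w) * A ^ length w \<le> cmod (f w) * A ^ length w + cmod (g w) * A ^ length w" for w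
    using mult_right_mono[OF norm_triangle_ineq4[of "f w" "g w"], of "A ^ length w"] assms(3)
    by (simp add: algebra_simps)
qed (use assms in simp)

context fixes a b :: real assumes a0: "0 \<le> a" and b0: "0 \<le> b"
begin

lemma mn_add:
  fixes M N :: "('v::finite) mat"
  assumes "mwsum a b M" "mwsum a b N"
  shows "mwsum a b (\<lambda>i j x. M i j x + N i j x) \<and> mn a b (\<lambda>i j x. M i j x + N i j x) \<le> mn a b M + mn a b N"
proof -
  have e: "wsum a b (\<lambda>x. M i j x + N i j x) \<and> wn a b (\<lambda>x. M i j x + N i j x) \<le> wn a b (M i j) + wn a b (N i j)" for i j
    by (rule wsum_le2[OF a0 b0]) (use assms a0 b0 in \<open>auto simp: mwsum_def norm_triangle_ineq\<close>)
  then have "mn a b (\<lambda>i j x. M i j x + N i j x) \<le> (\<Sum>i\<in>UNIV. \<Sum>j\<in>UNIV. wn a b (M i j) + wn a b (N i j))"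
    using a0 b0 unfolding mn_def[OF a0 b0] by (intro sum_mono) auto
  also have "\<dots> = mn a b M + mn a b N" using a0 b0 by (simp add: mn_def sum.distrib)
  finally show ?thesis using e a0 b0 by (simp add: mwsum_def)
qed

lemma mpow_diff_bound:
  fixes G F :: "('v::finite) mat"
  assumes G: "mwsum a b G" and F: "mwsum a b F" and D: "mwsum a b (mdiff G F)"
    and x: "mn a b G \<le> x" and y: "mn a b F \<le> y" and d: "mn a b (mdiff G F) \<le> \<delta>"
    and y0: "0 \<le> y"
  shows "mwsum a b (mdiff (mpow G (Suc k)) (mpow F (Suc k))) \<and>
    mn a b (mdiff (mpow G (Suc k)) (mpow F (Suc k))) \<le> \<delta> * (\<Sum>j\<le>k. x ^ j * y ^ (k - j))"
proof (induction k)
  case 0 then show ?case using D d by (simp add: mmult_ident[OF a0 b0])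
next
  case (Suc k)
  define P where "P = mdiff (mpow G (Suc k)) (mpow F (Suc k))"
  have eq: "mdiff (mpow G (Suc (Suc k))) (mpow F (Suc (Suc k))) =
     (\<lambda>i j x. mmult P G i j x + mmult (mpow F (Suc k)) (mdiff G F) i j x)"
    unfolding P_def by (intro ext) (rule mpow_diff_Suc)
  have b1: "mwsum a b (mmult P G) \<and> mn a b (mmult P G) \<le> mn a b P * mn a b G"
    by (rule mmult_bound[OF a0 b0]) (use Suc G in \<open>auto simp: P_def\<close>)
  have Fk: "mwsum a b (mpow F (Suc k)) \<and> mn a b (mpow F (Suc k)) \<le> mn a b F ^ Suc k"
    by (rule mpow_bound[OF a0 b0 F])
  have b2: "mwsum a b (mmult (mpow F (Suc k)) (mdiff G F)) \<and>
      mn a b (mmult (mpow F (Suc k)) (mdiff G F)) \<le> mn a b (mpow F (Suc k)) * mn a b (mdiff G F)"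
    by (rule mmult_bound[OF a0 b0]) (use Fk D in auto)
  have s: "mwsum a b (mdiff (mpow G (Suc (Suc k))) (mpow F (Suc (Suc k))))
     \<and> mn a b (mdiff (mpow G (Suc (Suc k))) (mpow F (Suc (Suc k))))
       \<le> mn a b (mmult P G) + mn a b (mmult (mpow F (Suc k)) (mdiff G F))"
    unfolding eq by (rule mn_add) (use b1 b2 in auto)
  have nP: "0 \<le> mn a b P" "0 \<le> mn a b G" "0 \<le> mn a b F" "0 \<le> mn a b (mdiff G F)"
    "0 \<le> mn a b (mpow F (Suc k))"
    by (rule mn_nn[OF a0 b0])+
  have "mn a b (mmult P G) \<le> (\<delta> * (\<Sum>j\<le>k. x ^ j * y ^ (k - j))) * x"
    using b1 Suc[folded P_def] x nP by (meson mult_mono order.trans)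
  moreover have "mn a b (mmult (mpow F (Suc k)) (mdiff G F)) \<le> y ^ Suc k * \<delta>"
  proof -
    have "mn a b F ^ Suc k \<le> y ^ Suc k" by (rule power_mono[OF y nP(3)])
    then show ?thesis using b2 Fk d nP by (meson mult_mono order.trans)
  qed
  ultimately have "mn a b (mdiff (mpow G (Suc (Suc k))) (mpow F (Suc (Suc k))))
      \<le> \<delta> * (x * (\<Sum>j\<le>k. x ^ j * y ^ (k - j)) + y ^ Suc k)"
    using s by (simp add: algebra_simps)
  also have "x * (\<Sum>j\<le>k. x ^ j * y ^ (k - j)) + y ^ Suc k = (\<Sum>j\<le>Suc k. x ^ j * y ^ (Suc k - j))"
    by (subst sum.atMost_Suc_shift) (simp add: sum_distrib_left mult.assoc)
  finally show ?case using s by simp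
qed

end

lemma tri_bound:
  fixes x y :: real
  assumes "0 \<le> x" "x < 1" "0 \<le> y" "y < 1"
  shows "(\<Sum>m<N. \<Sum>j\<le>Suc m. x ^ j * y ^ (Suc m - j)) \<le> 1 / ((1 - y) * (1 - x)) - 1"
proof -
  have "(\<Sum>k<Suc N. \<Sum>j\<le>k. x ^ j * y ^ (k - j)) = (\<Sum>(i,j)\<in>{(i,j). i + j < Suc N}. x ^ i * y ^ j)"
    by (rule sum.triangle_reindex[symmetric])
  also have "\<dots> \<le> (\<Sum>(i,j)\<in>{..<Suc N} \<times> {..<Suc N}. x ^ i * y ^ j)"
    by (rule sum_mono2) (use assms in auto)
  also have "\<dots> = (\<Sum>i<Suc N. x ^ i) * (\<Sum>j<Suc N. y ^ j)"
    by (simp only: sum_product sum.cartesian_product)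
  also have "\<dots> \<le> (1 / (1 - x)) * (1 / (1 - y))"
  proof (rule mult_mono)
    have g: "(\<Sum>i<n. z ^ i) \<le> 1 / (1 - z)" if "0 \<le> z" "z < 1" for z :: real and n
    proof -
      have "(\<Sum>i<n. z ^ i) = (1 - z ^ n) / (1 - z)" using that sum_gp_strict[of z n] by simp
      also have "\<dots> \<le> 1 / (1 - z)" using that by (intro divide_right_mono) auto
      finally show ?thesis .
    qed
    show "(\<Sum>i<Suc N. x ^ i) \<le> 1 / (1 - x)" by (rule g) (use assms in auto)
    show "(\<Sum>j<Suc N. y ^ j) \<le> 1 / (1 - y)" by (rule g) (use assms in auto)
    show "0 \<le> 1 / (1 - x)" using assms by simp
    show "0 \<le> (\<Sum>j<Suc N. y ^ j)" using assms by (simp add: sum_nonneg)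
  qed
  also have "\<dots> = 1 / ((1 - y) * (1 - x))" by simp
  finally have "(\<Sum>k<Suc N. \<Sum>j\<le>k. x ^ j * y ^ (k - j)) \<le> 1 / ((1 - y) * (1 - x))" .
  moreover have "(\<Sum>k<Suc N. \<Sum>j\<le>k. x ^ j * y ^ (k - j)) = 1 + (\<Sum>m<N. \<Sum>j\<le>Suc m. x ^ j * y ^ (Suc m - j))"
    by (subst sum.lessThan_Suc_shift) simp
  ultimately show ?thesis by simp
qed

lemma geo_bound:
  fixes x :: real assumes "0 \<le> x" "x < 1"
  shows "(\<Sum>m<N. x ^ (m + k)) \<le> x ^ k / (1 - x)"
proof -
  have "(\<Sum>m<N. x ^ (m + k)) = x ^ k * (\<Sum>m<N. x ^ m)" by (simp add: power_add sum_distrib_left mult.commute)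
  also have "(\<Sum>m<N. x ^ m) = (1 - x ^ N) / (1 - x)" using assms sum_gp_strict[of x N] by simp
  also have "x ^ k * ((1 - x ^ N) / (1 - x)) \<le> x ^ k * (1 / (1 - x))"
    using assms by (intro mult_left_mono divide_right_mono) auto
  finally show ?thesis by simp
qed

lemma logp_identity:
  fixes M :: "('v::finite) mat"
  shows "(\<Sum>i\<in>UNIV. M i i pr - logp M (Suc N) i i pr) =
    (\<Sum>m<N. (-1) ^ m / (of_nat m + 2) * mtrace (mpow M (m + 2)) pr)"
proof -
  have s: "(\<Sum>m\<in>{1..Suc N}. g m) = g 1 + (\<Sum>m<N. g (Suc (Suc m)))" for g :: "nat \<Rightarrow> complex"
    by (induction N) (auto simp: add.assoc)
  have "M i i pr - logp M (Suc N) i i pr = (\<Sum>m<N. (-1) ^ m / (of_nat m + 2) * mpow M (m + 2) i i pr)" for i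
    unfolding logp_def s by (simp add: mpow_1[of 0 0] add.commute del: mpow.simps)
  then have "(\<Sum>i\<in>UNIV. M i i pr - logp M (Suc N) i i pr) =
     (\<Sum>i\<in>UNIV. \<Sum>m<N. (-1) ^ m / (of_nat m + 2) * mpow M (m + 2) i i pr)" by simp
  also have "\<dots> = (\<Sum>m<N. (-1) ^ m / (of_nat m + 2) * mtrace (mpow M (m + 2)) pr)"
    by (subst sum.swap) (simp add: mtrace_def sum_distrib_left)
  finally show ?thesis .
qed



theorem mainTheorem10:
  fixes tau :: "('v::finite) list \<Rightarrow> complex" and C0 A :: real and g :: "'v list \<Rightarrow> complex"
  assumes tau_bd: "\<And>q. cmod (tau q) \<le> C0 ^ length q"
    and A_gt: "A > 1" and C0A: "C0 / A < 1/2"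
    and g_in: "inCompl A g" and g0: "g [] = 0" and g_small: "normA A g < A^2 / 2"
  shows "inCompl A (Qser tau g)
     \<and> (\<lambda>N. normA A (\<lambda>w. (\<Sum>m<N. (-1) ^ m / (of_nat m + 2) * Qm tau g (m + 2) w)
                          - Qser tau g w)) \<longlonglongrightarrow> 0
     \<and> (\<lambda>N. normA A (\<lambda>w. trmap tau (\<lambda>pr. \<Sum>i\<in>UNIV. JD (sigmaop g) i i pr
                                   - logp (JD (sigmaop g)) N i i pr) w
                          - Qser tau g w)) \<longlonglongrightarrow> 0
     \<and> (\<forall>f. inCompl A f \<and> f [] = 0 \<and> normA A f < A^2 / 2 \<longrightarrow>
          normA A (\<lambda>w. Qser tau g w - Qser tau f w)
            \<le> normA A (\<lambda>w. f w - g w) * (2 / A^2) *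
               (1 / ((1 - 2 * normA A f / A^2) * (1 - 2 * normA A g / A^2)) - 1))
     \<and> normA A (Qser tau g) \<le> (2 * normA A g / A^2)^2 / (1 - 2 * normA A g / A^2)"
proof -
  have A0: "0 < A" using A_gt by simp
  have "cmod (tau [undefined]) \<le> C0" using tau_bd[of "[undefined]"] by simp
  then have C00: "0 \<le> C0" by (meson norm_ge_zero order_trans)
  have CA: "C0 \<le> A / 2" using C0A A0 by (simp add: field_simps)
  define nb where "nb h = 2 * normA A h / A^2" for h :: "'v ser"
  have nb0: "0 \<le> nb h" for h unfolding nb_def using normA_nn[of A h] A0 by simp
  have nb1: "nb h < 1" if "normA A h < A^2 / 2" for h
    using that A0 unfolding nb_def by (simp add: field_simps)
  define T where "T h m = mtrace (mpow (JD (sigmaop h)) (Suc (Suc m)))" for h :: "'v ser" and m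
  define c where "c m = ((-1) ^ m / (of_nat m + 2) :: complex)" for m :: nat
  have cn: "cmod (c m) = 1 / (real m + 2)" for m
    unfolding c_def by (simp add: norm_divide norm_power) (metis of_nat_add of_nat_numeral norm_of_nat)
  define F where "F h m w = c m * Qm tau h (m + 2) w" for h :: "'v ser" and m w
  have Qser_eq: "Qser tau h = (\<lambda>w. \<Sum>m. F h m w)" for h
    by (rule ext) (simp add: Qser_def F_def c_def)
  have QmT: "Qm tau h (m + 2) = trmap tau (T h m)" "Qm tau h (Suc (Suc m)) = trmap tau (T h m)" for h m
    by (simp_all add: Qm_def T_def)
  have JDb: "mwsum A C0 (JD (sigmaop h)) \<and> mn A C0 (JD (sigmaop h)) \<le> nb h \<and>
      mwsum C0 A (JD (sigmaop h)) \<and> mn C0 A (JD (sigmaop h)) \<le> nb h" if hin: "inCompl A h" for h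
  proof -
    have 1: "mwsum A C0 (JD (sigmaop h)) \<and> mn A C0 (JD (sigmaop h)) \<le> 2 / A^2 * normA A h"
      by (rule JD_bound) (use A0 C00 Sbound(2)[OF C00 A0 CA] hin in auto)
    have 2: "mwsum C0 A (JD (sigmaop h)) \<and> mn C0 A (JD (sigmaop h)) \<le> 2 / A^2 * normA A h"
      by (rule JD_bound) (use A0 C00 Sbound(1)[OF C00 A0 CA] hin in auto)
    show ?thesis using 1 2 by (simp add: nb_def)
  qed
  have Tb: "wsum a b (T h m) \<and> wn a b (T h m) \<le> nb h ^ (m + 2)"
    if hin: "inCompl A h" and ab: "(a = A \<and> b = C0) \<or> (a = C0 \<and> b = A)" for h m a b
  proof -
    have a0: "0 \<le> a" and b0: "0 \<le> b" using ab A0 C00 by auto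
    have J: "mwsum a b (JD (sigmaop h)) \<and> mn a b (JD (sigmaop h)) \<le> nb h" using JDb[OF hin] ab by auto
    have P: "mwsum a b (mpow (JD (sigmaop h)) (Suc (Suc m))) \<and>
        mn a b (mpow (JD (sigmaop h)) (Suc (Suc m))) \<le> mn a b (JD (sigmaop h)) ^ Suc (Suc m)"
      by (rule mpow_bound[OF a0 b0]) (use J in simp)
    have Tr: "wsum a b (T h m) \<and> wn a b (T h m) \<le> mn a b (mpow (JD (sigmaop h)) (Suc (Suc m)))"
      unfolding T_def by (rule mtrace_bound[OF a0 b0]) (use P in simp)
    have "mn a b (JD (sigmaop h)) ^ Suc (Suc m) \<le> nb h ^ Suc (Suc m)"
      by (rule power_mono) (use J mn_nn[OF a0 b0] in auto)
    then show ?thesis using Tr P by simp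
  qed
  have Fb: "inCompl A (F h m) \<and> normA A (F h m) \<le> nb h ^ (m + 2)" if hin: "inCompl A h" for h m
  proof -
    have t1: "wsum A C0 (T h m) \<and> wn A C0 (T h m) \<le> nb h ^ (m + 2)" using Tb[OF hin] by blast
    have t2: "wsum C0 A (T h m) \<and> wn C0 A (T h m) \<le> nb h ^ (m + 2)" using Tb[OF hin] by blast
    have Q: "inCompl A (trmap tau (T h m)) \<and> normA A (trmap tau (T h m)) \<le> wn A C0 (T h m) + wn C0 A (T h m)"
      by (rule trmap_bound[OF tau_bd C00 A0]) (use t1 t2 in auto)
    have e: "F h m = (\<lambda>w. c m * trmap tau (T h m) w)" by (rule ext) (simp add: F_def QmT)
    have "normA A (F h m) = 1 / (real m + 2) * normA A (trmap tau (T h m))"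
      unfolding e normA_scale[OF conjunct1[OF Q]] cn by simp
    also have "\<dots> \<le> 1 / (real m + 2) * (2 * nb h ^ (m + 2))"
      using Q t1 t2 by (intro mult_left_mono) auto
    also have "\<dots> \<le> nb h ^ (m + 2)" using nb0[of h] by (simp add: field_simps)
    finally show ?thesis using inCompl_scale[OF conjunct1[OF Q]] e by simp
  qed
  have Sb: "(\<forall>w. summable (\<lambda>m. F h (m + k) w)) \<and> inCompl A (\<lambda>w. \<Sum>m. F h (m + k) w) \<and>
      normA A (\<lambda>w. \<Sum>m. F h (m + k) w) \<le> nb h ^ (k + 2) / (1 - nb h)"
    if hin: "inCompl A h" and hs: "normA A h < A^2 / 2" for h k
  proof (rule ser_sum_bound[OF A0])
    show "inCompl A (F h (m + k))" for m using Fb[OF hin] by blast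
    fix N
    have "(\<Sum>m<N. normA A (F h (m + k))) \<le> (\<Sum>m<N. nb h ^ (m + (k + 2)))"
      by (intro sum_mono) (use Fb[OF hin] in \<open>simp add: add.assoc\<close>)
    also have "\<dots> \<le> nb h ^ (k + 2) / (1 - nb h)" by (rule geo_bound) (use nb0 nb1[OF hs] in auto)
    finally show "(\<Sum>m<N. normA A (F h (m + k))) \<le> nb h ^ (k + 2) / (1 - nb h)" .
  qed
  have S0: "(\<forall>w. summable (\<lambda>m. F h m w)) \<and> inCompl A (Qser tau h) \<and> normA A (Qser tau h) \<le> nb h ^ 2 / (1 - nb h)"
    if "inCompl A h" "normA A h < A^2 / 2" for h
    using Sb[OF that, of 0] by (simp add: Qser_eq power2_eq_square)
  have c1: "inCompl A (Qser tau g)" and c5: "normA A (Qser tau g) \<le> (2 * normA A g / A^2)^2 / (1 - 2 * normA A g / A^2)"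
    using S0[OF g_in g_small] by (simp_all add: nb_def)
  have c2eq: "normA A (\<lambda>w. (\<Sum>m<N. (-1) ^ m / (of_nat m + 2) * Qm tau g (m + 2) w) - Qser tau g w)
      = normA A (\<lambda>w. \<Sum>m. F g (m + N) w)" for N
  proof -
    have "(\<Sum>m<N. (-1) ^ m / (of_nat m + 2) * Qm tau g (m + 2) w) - Qser tau g w = - (\<Sum>m. F g (m + N) w)" for w
    proof -
      have s: "summable (\<lambda>m. F g m w)" using S0[OF g_in g_small] by blast
      show ?thesis using suminf_split_initial_segment[OF s, of N]
        by (simp add: Qser_eq F_def c_def)
    qed
    then show ?thesis by (simp add: normA_uminus)
  qed
  have c2: "(\<lambda>N. normA A (\<lambda>w. (\<Sum>m<N. (-1) ^ m / (of_nat m + 2) * Qm tau g (m + 2) w) - Qser tau g w)) \<longlonglongrightarrow> 0"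
  proof (rule tendsto_sandwich[of "\<lambda>_. 0" _ sequentially "\<lambda>N. nb g ^ 2 / (1 - nb g) * nb g ^ N"])
    show "\<forall>\<^sub>F N in sequentially. 0 \<le> normA A (\<lambda>w. (\<Sum>m<N. (-1) ^ m / (of_nat m + 2) * Qm tau g (m + 2) w) - Qser tau g w)"
      by (intro always_eventually allI normA_nn) (use A0 in simp)
    show "\<forall>\<^sub>F N in sequentially. normA A (\<lambda>w. (\<Sum>m<N. (-1) ^ m / (of_nat m + 2) * Qm tau g (m + 2) w) - Qser tau g w)
        \<le> nb g ^ 2 / (1 - nb g) * nb g ^ N"
    proof (rule always_eventually, rule allI)
      fix N
      have eq: "nb g ^ (N + 2) / (1 - nb g) = nb g ^ 2 / (1 - nb g) * nb g ^ N" by (simp add: power_add power2_eq_square)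
      then show "normA A (\<lambda>w. (\<Sum>m<N. (-1) ^ m / (of_nat m + 2) * Qm tau g (m + 2) w) - Qser tau g w)
        \<le> nb g ^ 2 / (1 - nb g) * nb g ^ N" unfolding c2eq eq[symmetric] using Sb[OF g_in g_small, of N] by blast
    qed
    show "(\<lambda>_. 0) \<longlonglongrightarrow> (0::real)" by simp
    show "(\<lambda>N. nb g ^ 2 / (1 - nb g) * nb g ^ N) \<longlonglongrightarrow> 0"
      by (rule tendsto_mult_right_zero, rule LIMSEQ_power_zero) (use nb0 nb1[OF g_small] in auto)
  qed
  have c3: "(\<lambda>N. normA A (\<lambda>w. trmap tau (\<lambda>pr. \<Sum>i\<in>UNIV. JD (sigmaop g) i i pr
                                   - logp (JD (sigmaop g)) N i i pr) w - Qser tau g w)) \<longlonglongrightarrow> 0"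
  proof -
    have e: "trmap tau (\<lambda>pr. \<Sum>i\<in>UNIV. JD (sigmaop g) i i pr - logp (JD (sigmaop g)) (Suc N) i i pr) w
        = (\<Sum>m<N. (-1) ^ m / (of_nat m + 2) * Qm tau g (m + 2) w)" for N w
    proof -
      have "trmap tau (\<lambda>pr. \<Sum>i\<in>UNIV. JD (sigmaop g) i i pr - logp (JD (sigmaop g)) (Suc N) i i pr) w
          = trmap tau (\<lambda>pr. \<Sum>m<N. c m * T g m pr) w"
        by (simp add: logp_identity c_def T_def)
      also have "\<dots> = (\<Sum>m<N. c m * trmap tau (T g m) w)"
        by (rule trmap_lin[OF tau_bd C00 A0]) (use Tb[OF g_in] in auto)
      finally show ?thesis by (simp add: QmT c_def)
    qed
    have "(\<lambda>N. normA A (\<lambda>w. trmap tau (\<lambda>pr. \<Sum>i\<in>UNIV. JD (sigmaop g) i i pr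
                                   - logp (JD (sigmaop g)) (Suc N) i i pr) w - Qser tau g w)) \<longlonglongrightarrow> 0"
      unfolding e by (rule c2)
    then show ?thesis by (rule LIMSEQ_imp_Suc)
  qed
  have c4: "normA A (\<lambda>w. Qser tau g w - Qser tau f w)
            \<le> normA A (\<lambda>w. f w - g w) * (2 / A^2) *
               (1 / ((1 - 2 * normA A f / A^2) * (1 - 2 * normA A g / A^2)) - 1)"
    if f_in: "inCompl A f" and f_small: "normA A f < A^2 / 2" for f
  proof -
    define \<delta> where "\<delta> = normA A (\<lambda>w. f w - g w) * (2 / A^2)"
    define R where "R = 1 / ((1 - nb f) * (1 - nb g)) - 1"
    have d0: "0 \<le> \<delta>" unfolding \<delta>_def using normA_nn[of A "\<lambda>w. f w - g w"] A0 by simp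
    have gf_in: "inCompl A (\<lambda>w. g w - f w)" by (rule inCompl_diff) (use g_in f_in A0 in auto)
    have nbd: "nb (\<lambda>w. g w - f w) = \<delta>" unfolding nb_def \<delta>_def
      by (subst normA_commute) simp
    have mdJ: "mdiff (JD (sigmaop g)) (JD (sigmaop f)) = JD (sigmaop (\<lambda>w. g w - f w))"
      unfolding mdiff_def by (intro ext) (rule JD_diff)
    define Sm where "Sm m = (\<Sum>j\<le>Suc m. nb g ^ j * nb f ^ (Suc m - j))" for m
    define D where "D m = (\<lambda>w. c m * trmap tau (mtrace (mdiff (mpow (JD (sigmaop g)) (Suc (Suc m)))
                          (mpow (JD (sigmaop f)) (Suc (Suc m))))) w)" for m
    have Db: "inCompl A (D m) \<and> normA A (D m) \<le> \<delta> * Sm m" for m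
    proof -
      define U where "U = mtrace (mdiff (mpow (JD (sigmaop g)) (Suc (Suc m))) (mpow (JD (sigmaop f)) (Suc (Suc m))))"
      have Ub: "wsum a b U \<and> wn a b U \<le> \<delta> * Sm m" if ab: "(a = A \<and> b = C0) \<or> (a = C0 \<and> b = A)" for a b
      proof -
        have a0: "0 \<le> a" and b0: "0 \<le> b" using ab A0 C00 by auto
        have Jg: "mwsum a b (JD (sigmaop g)) \<and> mn a b (JD (sigmaop g)) \<le> nb g" using JDb[OF g_in] ab by auto
        have Jf: "mwsum a b (JD (sigmaop f)) \<and> mn a b (JD (sigmaop f)) \<le> nb f" using JDb[OF f_in] ab by auto
        have Jd: "mwsum a b (mdiff (JD (sigmaop g)) (JD (sigmaop f))) \<and> mn a b (mdiff (JD (sigmaop g)) (JD (sigmaop f))) \<le> \<delta>"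
          using JDb[OF gf_in] ab nbd mdJ by auto
        have P: "mwsum a b (mdiff (mpow (JD (sigmaop g)) (Suc (Suc m))) (mpow (JD (sigmaop f)) (Suc (Suc m)))) \<and>
           mn a b (mdiff (mpow (JD (sigmaop g)) (Suc (Suc m))) (mpow (JD (sigmaop f)) (Suc (Suc m)))) \<le> \<delta> * Sm m"
          unfolding Sm_def by (rule mpow_diff_bound[OF a0 b0]) (use Jg Jf Jd nb0 in auto)
        show ?thesis unfolding U_def using mtrace_bound[OF a0 b0] P by (meson order_trans)
      qed
      have Q: "inCompl A (trmap tau U) \<and> normA A (trmap tau U) \<le> wn A C0 U + wn C0 A U"
        by (rule trmap_bound[OF tau_bd C00 A0]) (use Ub in auto)
      have e: "D m = (\<lambda>w. c m * trmap tau U w)" by (simp add: D_def U_def)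
      have Sm0: "0 \<le> Sm m" unfolding Sm_def using nb0 by (intro sum_nonneg) simp
      have "normA A (D m) = 1 / (real m + 2) * normA A (trmap tau U)"
        unfolding e normA_scale[OF conjunct1[OF Q]] cn by simp
      also have "\<dots> \<le> 1 / (real m + 2) * (2 * (\<delta> * Sm m))"
        using Q Ub[of A C0] Ub[of C0 A] by (intro mult_left_mono) auto
      also have "\<dots> \<le> \<delta> * Sm m" using d0 Sm0 by (simp add: field_simps)
      finally show ?thesis using inCompl_scale[OF conjunct1[OF Q]] e by simp
    qed
    have Deq: "F g m w - F f m w = D m w" for m w
    proof -
      define Ug where "Ug = T g m" define Uf where "Uf = T f m"
      have wg: "wsum A C0 Ug" "wsum C0 A Ug" using Tb[OF g_in] unfolding Ug_def by blast+
      have wf: "wsum A C0 Uf" "wsum C0 A Uf" using Tb[OF f_in] unfolding Uf_def by blast+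
      have "trmap tau (\<lambda>x. \<Sum>i\<in>{True, False}. (if i then 1 else -1) * (if i then Ug else Uf) x) w
          = (\<Sum>i\<in>{True, False}. (if i then 1 else -1) * trmap tau (if i then Ug else Uf) w)"
        by (rule trmap_lin[OF tau_bd C00 A0]) (use wg wf in auto)
      then have "trmap tau (\<lambda>x. Ug x - Uf x) w = trmap tau Ug w - trmap tau Uf w" by simp
      moreover have "(\<lambda>x. Ug x - Uf x) = mtrace (mdiff (mpow (JD (sigmaop g)) (Suc (Suc m))) (mpow (JD (sigmaop f)) (Suc (Suc m))))"
        unfolding Ug_def Uf_def T_def mtrace_def mdiff_def by (simp add: sum_subtractf)
      ultimately show ?thesis unfolding F_def D_def QmT Ug_def Uf_def by (simp add: right_diff_distrib)
    qed
    have SD: "(\<forall>w. summable (\<lambda>m. D m w)) \<and> inCompl A (\<lambda>w. \<Sum>m. D m w) \<and> normA A (\<lambda>w. \<Sum>m. D m w) \<le> \<delta> * R"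
    proof (rule ser_sum_bound[OF A0])
      show "inCompl A (D m)" for m using Db by blast
      fix N
      have "(\<Sum>m<N. normA A (D m)) \<le> (\<Sum>m<N. \<delta> * Sm m)" by (intro sum_mono) (use Db in blast)
      also have "\<dots> = \<delta> * (\<Sum>m<N. Sm m)" by (simp add: sum_distrib_left)
      also have "\<dots> \<le> \<delta> * R" unfolding R_def Sm_def
        by (intro mult_left_mono tri_bound d0) (use nb0 nb1[OF g_small] nb1[OF f_small] in auto)
      finally show "(\<Sum>m<N. normA A (D m)) \<le> \<delta> * R" .
    qed
    have "(\<lambda>w. Qser tau g w - Qser tau f w) = (\<lambda>w. \<Sum>m. D m w)"
    proof
      fix w
      have sg: "summable (\<lambda>m. F g m w)" using S0[OF g_in g_small] by blast
      have sf: "summable (\<lambda>m. F f m w)" using S0[OF f_in f_small] by blast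
      show "Qser tau g w - Qser tau f w = (\<Sum>m. D m w)"
        unfolding Qser_eq using suminf_diff[OF sg sf] Deq by simp
    qed
    then have "normA A (\<lambda>w. Qser tau g w - Qser tau f w) \<le> \<delta> * R" using SD by simp
    then show ?thesis unfolding \<delta>_def R_def nb_def by (simp add: mult.assoc)
  qed
  show ?thesis using c1 c2 c3 c4 c5 by blast
qed


end
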